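(* The algorithm \textsc{Arrows} described in the context can be implemented so that its total running time over the horizon $t=1,\dots,n$ is $O(n\log n)$.
   Context: Haar transform: for $k$ a power of $2$, $H\in\mathbb{R}^{k\times k}$ is the orthonormal discrete Haar wavelet transform: $(Hv)_1=k^{-1/2}\sum_i v_i$, and for each level $l=0,\dots,\log_2k-1$ and $j=1,\dots,2^l$, splitting the block $\{(j-1)k/2^l+1,\dots,jk/2^l\}$ into first half $I^-$ and second half $I^+$, there is a coefficient $(\sum_{I^+}v_i-\sum_{I^-}v_i)/\sqrt{k/2^l}$; the level-$l$ coefficients form the block $\alpha[l]\in\mathbb{R}^{2^l}$. $pad_0(y_a,\dots,y_b)$ is $(y_a-\bar y_{a:b},\dots,y_b-\bar y_{a:b})$ ($\bar y_{a:b}$ the average) followed by zeros up to length $k$, the smallest power of $2$ $\ge b-a+1$. $T$ is coordinatewise soft thresholding at level $\sigma\sqrt{\beta\log n}$. Algorithm \textsc{Arrows} (inputs: horizon $n$, $\sigma>0$, $\delta\in(0,1]$, $\beta>24$; observations $y_1,\dots,y_n$ arrive online): set $t_h=1$, $newBin=1$, $y_0=0$. For $t=1,\dots,n$: if $newBin=1$ predict $x_t=y_{t-1}$, else $x_t=\bar y_{t_h:t-1}$; set $newBin=0$, observe $y_t$; let $\tilde y=pad_0(y_{t_h},\dots,y_t)$ with length $k$ and $\hat\alpha=T(H\tilde y)$; if $\frac{1}{\sqrt k}\sum_{l=0}^{\log_2k-1}2^{l/2}\|\hat\alpha[l]\|_1>\frac{\sigma}{\sqrt k}$ then set $newBin=1$,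 $t_h=t+1$. *)

theory Defs
  imports Complex_Main
begin

definition obs :: "real list \<Rightarrow> nat \<Rightarrow> real" where
  "obs ys t = (if t = 0 then 0 else ys ! (t - 1))"

definition avg :: "real list \<Rightarrow> nat \<Rightarrow> nat \<Rightarrow> real" where
  "avg ys a b = (\<Sum>i=a..b. obs ys i) / real (b - a + 1)"

definition nlev :: "nat \<Rightarrow> nat" where
  "nlev m = (LEAST p. m \<le> 2 ^ p)"

definition pad0 :: "real list \<Rightarrow> nat \<Rightarrow> nat \<Rightarrow> nat \<Rightarrow> real" where
  "pad0 ys a b i = (if 1 \<le> i \<and> i \<le> b - a + 1 then obs ys (a + i - 1) - avg ys a b else 0)"

definition haar_detail :: "nat \<Rightarrow> (nat \<Rightarrow> real) \<Rightarrow> nat \<Rightarrow> nat \<Rightarrow> real" where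
  "haar_detail k v l j =
     (let s = (j - 1) * (k div 2 ^ l); h = k div 2 ^ (Suc l) in
       ((\<Sum>i=s+h+1..s+2*h. v i) - (\<Sum>i=s+1..s+h. v i)) / sqrt (real k / 2 ^ l))"

definition soft_thr :: "real \<Rightarrow> real \<Rightarrow> real" where
  "soft_thr lam x = sgn x * max (\<bar>x\<bar> - lam) 0"

text \<open>The bin-closing test after observing y_b, current bin starting at a.\<close>
definition split_test :: "nat \<Rightarrow> real \<Rightarrow> real \<Rightarrow> real list \<Rightarrow> nat \<Rightarrow> nat \<Rightarrow> bool" where
  "split_test n \<sigma> \<beta> ys a b =
     (let L = nlev (b - a + 1); k = 2 ^ L; v = pad0 ys a b;
          lam = \<sigma> * sqrt (\<beta> * ln (real n)) in
      (1 / sqrt (real k)) * (\<Sum>l<L. 2 powr (real l / 2) *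
          (\<Sum>j=1..2^l. \<bar>soft_thr lam (haar_detail k v l j)\<bar>)) > \<sigma> / sqrt (real k))"

text \<open>State (t_h, newBin) after rounds 1..t.\<close>
fun arrows_state :: "nat \<Rightarrow> real \<Rightarrow> real \<Rightarrow> real list \<Rightarrow> nat \<Rightarrow> nat \<times> bool" where
  "arrows_state n \<sigma> \<beta> ys 0 = (1, True)"
| "arrows_state n \<sigma> \<beta> ys (Suc t) =
     (let th = fst (arrows_state n \<sigma> \<beta> ys t) in
      if split_test n \<sigma> \<beta> ys th (Suc t) then (Suc t + 1, True) else (th, False))"

definition arrows_pred :: "nat \<Rightarrow> real \<Rightarrow> real \<Rightarrow> real list \<Rightarrow> nat \<Rightarrow> real" where
  "arrows_pred n \<sigma> \<beta> ys t =
     (let (th, nb) = arrows_state n \<sigma> \<beta> ys (t - 1) in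
      if nb then obs ys (t - 1) else avg ys th (t - 1))"

section \<open>A unit-cost RAM model with online input/output\<close>

text \<open>Integer (nat) memory and real memory, both indirectly addressed by naturals.
  Reals can be built from nats but not converted back (no floor).\<close>

datatype nexp = NC nat | NLd nexp | NPlus nexp nexp | NMinus nexp nexp | NTimes nexp nexp
  | NDiv nexp nexp | NMod nexp nexp

datatype rexp = RC real | RLd nexp | ROfNat nexp | RPlus rexp rexp | RMinus rexp rexp
  | RTimes rexp rexp | RDivide rexp rexp | RSqrt rexp | RLn rexp | RAbs rexp

datatype bexp = BNLess nexp nexp | BRLess rexp rexp | BNot bexp | BAnd bexp bexp

datatype com = Skip | NStore nexp nexp | RStore nexp rexp | Seq com com | If bexp com com
  | While bexp com | Read nexp | Write rexp

datatype event = ReadEv | OutEv real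

record state =
  nmem :: "nat \<Rightarrow> nat"
  rmem :: "nat \<Rightarrow> real"
  inp :: "real list"
  trace :: "event list"

fun nval :: "nexp \<Rightarrow> state \<Rightarrow> nat" where
  "nval (NC c) s = c"
| "nval (NLd a) s = nmem s (nval a s)"
| "nval (NPlus a b) s = nval a s + nval b s"
| "nval (NMinus a b) s = nval a s - nval b s"
| "nval (NTimes a b) s = nval a s * nval b s"
| "nval (NDiv a b) s = nval a s div nval b s"
| "nval (NMod a b) s = nval a s mod nval b s"

fun rval :: "rexp \<Rightarrow> state \<Rightarrow> real" where
  "rval (RC c) s = c"
| "rval (RLd a) s = rmem s (nval a s)"
| "rval (ROfNat a) s = real (nval a s)"
| "rval (RPlus a b) s = rval a s + rval b s"
| "rval (RMinus a b) s = rval a s - rval b s"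
| "rval (RTimes a b) s = rval a s * rval b s"
| "rval (RDivide a b) s = rval a s / rval b s"
| "rval (RSqrt a) s = sqrt (rval a s)"
| "rval (RLn a) s = ln (rval a s)"
| "rval (RAbs a) s = \<bar>rval a s\<bar>"

fun bval :: "bexp \<Rightarrow> state \<Rightarrow> bool" where
  "bval (BNLess a b) s = (nval a s < nval b s)"
| "bval (BRLess a b) s = (rval a s < rval b s)"
| "bval (BNot b) s = (\<not> bval b s)"
| "bval (BAnd a b) s = (bval a s \<and> bval b s)"

fun ncost :: "nexp \<Rightarrow> nat" where
  "ncost (NC c) = 1"
| "ncost (NLd a) = 1 + ncost a"
| "ncost (NPlus a b) = 1 + ncost a + ncost b"
| "ncost (NMinus a b) = 1 + ncost a + ncost b"
| "ncost (NTimes a b) = 1 + ncost a + ncost b"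
| "ncost (NDiv a b) = 1 + ncost a + ncost b"
| "ncost (NMod a b) = 1 + ncost a + ncost b"

fun rcost :: "rexp \<Rightarrow> nat" where
  "rcost (RC c) = 1"
| "rcost (RLd a) = 1 + ncost a"
| "rcost (ROfNat a) = 1 + ncost a"
| "rcost (RPlus a b) = 1 + rcost a + rcost b"
| "rcost (RMinus a b) = 1 + rcost a + rcost b"
| "rcost (RTimes a b) = 1 + rcost a + rcost b"
| "rcost (RDivide a b) = 1 + rcost a + rcost b"
| "rcost (RSqrt a) = 1 + rcost a"
| "rcost (RLn a) = 1 + rcost a"
| "rcost (RAbs a) = 1 + rcost a"

fun bcost :: "bexp \<Rightarrow> nat" where
  "bcost (BNLess a b) = 1 + ncost a + ncost b"
| "bcost (BRLess a b) = 1 + rcost a + rcost b"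
| "bcost (BNot b) = 1 + bcost b"
| "bcost (BAnd a b) = 1 + bcost a + bcost b"

text \<open>Big-step semantics with running time: big_step (c, s) t s' means c started in s
  terminates in s' after t time units. Read consumes the next observation (stuck if none
  remain) and stores it; Write outputs a prediction.\<close>

inductive big_step :: "com \<times> state \<Rightarrow> nat \<Rightarrow> state \<Rightarrow> bool" where
  SkipB: "big_step (Skip, s) 1 s"
| NStoreB: "big_step (NStore a e, s) (1 + ncost a + ncost e)
             (s\<lparr>nmem := (nmem s)(nval a s := nval e s)\<rparr>)"
| RStoreB: "big_step (RStore a e, s) (1 + ncost a + rcost e)
             (s\<lparr>rmem := (rmem s)(nval a s := rval e s)\<rparr>)"
| SeqB: "big_step (c1, s1) t1 s2 \<Longrightarrow> big_step (c2, s2) t2 s3 \<Longrightarrow>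
          big_step (Seq c1 c2, s1) (t1 + t2) s3"
| IfTrueB: "bval b s \<Longrightarrow> big_step (c1, s) t s' \<Longrightarrow>
          big_step (If b c1 c2, s) (1 + bcost b + t) s'"
| IfFalseB: "\<not> bval b s \<Longrightarrow> big_step (c2, s) t s' \<Longrightarrow>
          big_step (If b c1 c2, s) (1 + bcost b + t) s'"
| WhileFalseB: "\<not> bval b s \<Longrightarrow> big_step (While b c, s) (1 + bcost b) s"
| WhileTrueB: "bval b s1 \<Longrightarrow> big_step (c, s1) t1 s2 \<Longrightarrow> big_step (While b c, s2) t2 s3 \<Longrightarrow>
          big_step (While b c, s1) (1 + bcost b + t1 + t2) s3"
| ReadB: "inp s = y # ys \<Longrightarrow>
          big_step (Read a, s) (1 + ncost a)
            (s\<lparr>rmem := (rmem s)(nval a s := y), inp := ys, trace := trace s @ [ReadEv]\<rparr>)"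
| WriteB: "big_step (Write e, s) (1 + rcost e) (s\<lparr>trace := trace s @ [OutEv (rval e s)]\<rparr>)"

definition init_state :: "nat \<Rightarrow> real \<Rightarrow> real \<Rightarrow> real \<Rightarrow> real list \<Rightarrow> state" where
  "init_state n \<sigma> \<delta> \<beta> ys =
     \<lparr>nmem = (\<lambda>_. 0)(0 := n), rmem = (\<lambda>_. 0)(0 := \<sigma>, 1 := \<delta>, 2 := \<beta>),
      inp = ys, trace = []\<rparr>"

definition arrows_trace :: "nat \<Rightarrow> real \<Rightarrow> real \<Rightarrow> real list \<Rightarrow> event list" where
  "arrows_trace n \<sigma> \<beta> ys = concat (map (\<lambda>t. [OutEv (arrows_pred n \<sigma> \<beta> ys t), ReadEv]) [1..<n+1])"

end

theory Submission
  imports Defs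
begin

definition PS :: "real list \<Rightarrow> nat \<Rightarrow> nat \<Rightarrow> real" where
  "PS ys a i = (\<Sum>j<i. obs ys (a + j))"

definition gf :: "real \<Rightarrow> real \<Rightarrow> real \<Rightarrow> real" where
  "gf lam p D = max (\<bar>D\<bar> / sqrt p - lam) 0 / sqrt p"

definition GB :: "real \<Rightarrow> real list \<Rightarrow> nat \<Rightarrow> nat \<Rightarrow> nat \<Rightarrow> real" where
  "GB lam ys a q j = gf lam (2^q) (PS ys a (j*2^q) - 2 * PS ys a (j*2^q - 2^(q-1)) + PS ys a ((j-1)*2^q))"

definition FF :: "real \<Rightarrow> real list \<Rightarrow> nat \<Rightarrow> nat \<Rightarrow> real" where
  "FF lam ys a m = (\<Sum>q=1..m. \<Sum>j=1..m div 2^q. GB lam ys a q j)"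

definition Pt :: "real \<Rightarrow> real list \<Rightarrow> nat \<Rightarrow> nat \<Rightarrow> nat \<Rightarrow> real" where
  "Pt lam ys a m q = (let p = (2::nat)^q; s = m div p * p; h = p div 2; mu = PS ys a m / real m in
     gf lam (real p) (if s + h < m then (PS ys a s - mu * real s) - 2 * (PS ys a (s+h) - mu * real (s+h))
                      else PS ys a s - mu * real s))"

lemma PS_Suc: "PS ys a (Suc i) = PS ys a i + obs ys (a + i)"
  by (simp add: PS_def)

lemma avg_PS: "a \<le> b \<Longrightarrow> avg ys a b = PS ys a (b - a + 1) / real (b - a + 1)"
proof -
  assume "a \<le> b"
  have "(\<Sum>i=a..b. obs ys i) = (\<Sum>i=a..<Suc b. obs ys i)" by (simp add: atLeastLessThanSuc_atLeastAtMost)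
  also have "\<dots> = (\<Sum>j=0..<Suc b - a. obs ys (a + j))" using sum.atLeastLessThan_shift_0[of "obs ys" a "Suc b"] by (simp add: comp_def)
  also have "\<dots> = PS ys a (b - a + 1)" using \<open>a \<le> b\<close> by (simp add: PS_def lessThan_atLeast0 Suc_diff_le)
  finally show ?thesis by (simp add: avg_def)
qed

lemma nlev_ge: "m \<le> 2 ^ nlev m"
  unfolding nlev_def by (rule LeastI[of _ m]) (simp add: less_exp less_imp_le)

lemma nlev_iff: "m \<le> 2 ^ p \<longleftrightarrow> nlev m \<le> p"
proof
  assume "m \<le> 2^p" thus "nlev m \<le> p" unfolding nlev_def by (rule Least_le)
next
  assume "nlev m \<le> p"
  hence "(2::nat) ^ nlev m \<le> 2 ^ p" by simp
  thus "m \<le> 2^p" using nlev_ge[of m] by linarith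
qed

lemma nlev_le_self: "nlev m \<le> m"
  using nlev_iff[of m m] less_exp[of m] by linarith

lemma sum_pad0_le: "x \<le> b - a + 1 \<Longrightarrow> (\<Sum>i=1..x. pad0 ys a b i) = PS ys a x - avg ys a b * real x"
proof (induction x)
  case 0 then show ?case by (simp add: PS_def)
next
  case (Suc x)
  have e1: "(\<Sum>i=1..Suc x. pad0 ys a b i) = (\<Sum>i=1..x. pad0 ys a b i) + pad0 ys a b (Suc x)"
    by (rule sum.cl_ivl_Suc[THEN trans]) simp
  have e2: "pad0 ys a b (Suc x) = obs ys (a + x) - avg ys a b" using Suc.prems unfolding pad0_def by simp
  have "(\<Sum>i=1..x. pad0 ys a b i) = PS ys a x - avg ys a b * real x" using Suc by simp
  then show ?case unfolding e1 e2 PS_Suc by (simp add: algebra_simps)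
qed

lemma sum_pad0_ge: "b - a + 1 \<le> x \<Longrightarrow> (\<Sum>i=1..x. pad0 ys a b i) = (\<Sum>i=1..b-a+1. pad0 ys a b i)"
proof (induction x)
  case 0 then show ?case by simp
next
  case (Suc x)
  show ?case
  proof (cases "b - a + 1 = Suc x")
    case True then show ?thesis by simp
  next
    case False
    then have "b - a + 1 \<le> x" using Suc.prems by simp
    have e1: "(\<Sum>i=1..Suc x. pad0 ys a b i) = (\<Sum>i=1..x. pad0 ys a b i) + pad0 ys a b (Suc x)"
      by (rule sum.cl_ivl_Suc[THEN trans]) simp
    have e2: "pad0 ys a b (Suc x) = 0" using Suc.prems False unfolding pad0_def by simp
    show ?thesis unfolding e1 e2 using Suc.IH \<open>b - a + 1 \<le> x\<close> by simp
  qed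
qed

lemma sum_pad0: assumes "a \<le> b"
  shows "(\<Sum>i=1..x. pad0 ys a b i) = PS ys a (min x (b-a+1)) - avg ys a b * real (min x (b-a+1))"
proof (cases "x \<le> b - a + 1")
  case True then show ?thesis using sum_pad0_le[OF True] by (simp add: min_def)
next
  case False then show ?thesis using sum_pad0_ge[of b a x ys] sum_pad0_le[of "b-a+1" b a ys] by (simp add: min_def)
qed

lemma sum_interval: "(x::nat) \<le> z \<Longrightarrow> (\<Sum>i=x+1..z. f i) = (\<Sum>i=1..z. f i) - (\<Sum>i=1..x. (f i :: real))"
  using sum.ub_add_nat[of 1 x f "z - x"] by simp

definition Wf :: "real list \<Rightarrow> nat \<Rightarrow> nat \<Rightarrow> nat \<Rightarrow> real" where
  "Wf ys a b x = (\<Sum>i=1..x. pad0 ys a b i)"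

definition DD :: "real list \<Rightarrow> nat \<Rightarrow> nat \<Rightarrow> nat \<Rightarrow> nat \<Rightarrow> real" where
  "DD ys a b q s = Wf ys a b (s + 2^q) - 2 * Wf ys a b (s + 2^(q-1)) + Wf ys a b s"

lemma Wf_le: "x \<le> b - a + 1 \<Longrightarrow> Wf ys a b x = PS ys a x - avg ys a b * real x"
  unfolding Wf_def by (rule sum_pad0_le)

lemma Wf_ge: assumes "a \<le> b" "b - a + 1 \<le> x" shows "Wf ys a b x = 0"
proof -
  have "Wf ys a b x = Wf ys a b (b-a+1)" unfolding Wf_def using assms(2) by (rule sum_pad0_ge)
  also have "\<dots> = 0" using Wf_le[of "b-a+1" b a ys] avg_PS[OF assms(1), of ys] by simp
  finally show ?thesis .
qed

lemma haar_eq: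
  assumes "l < L" "1 \<le> j"
  shows "haar_detail (2^L) (pad0 ys a b) l j = DD ys a b (L-l) ((j-1)*2^(L-l)) / sqrt (2^(L-l))"
proof -
  have k1: "(2::nat)^L div 2^l = 2^(L-l)" using assms(1) by (simp add: power_diff)
  have k2: "(2::nat)^L div 2^(Suc l) = 2^(L-l-1)" using assms(1) by (simp add: power_diff)
  have k3: "real (2^L) / 2^l = (2::real)^(L-l)" using assms(1) by (simp add: power_diff)
  have k4: "(2::nat)^(L-l-1) * 2 = 2^(L-l)" using assms(1)
    by (metis Suc_diff_Suc diff_Suc_1 power_Suc2 zero_less_diff)
  define s where "s = (j-1)*2^(L-l)"
  define h where "h = (2::nat)^(L-l-1)"
  have "haar_detail (2^L) (pad0 ys a b) l j =
     ((\<Sum>i=s+h+1..s+2*h. pad0 ys a b i) - (\<Sum>i=s+1..s+h. pad0 ys a b i)) / sqrt (2^(L-l))"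
    unfolding haar_detail_def Let_def k1 k2 k3 s_def h_def by simp
  also have "(\<Sum>i=s+h+1..s+2*h. pad0 ys a b i) = Wf ys a b (s+2*h) - Wf ys a b (s+h)"
    unfolding Wf_def by (rule sum_interval) simp
  also have "(\<Sum>i=s+1..s+h. pad0 ys a b i) = Wf ys a b (s+h) - Wf ys a b s"
    unfolding Wf_def by (rule sum_interval) simp
  also have "2*h = 2^(L-l)" unfolding h_def using k4 by simp
  finally show ?thesis unfolding DD_def s_def h_def by (simp add: algebra_simps)
qed

lemma pow_half: "1 \<le> q \<Longrightarrow> (2::nat)^(q-1) * 2 = 2^q"
  by (metis Suc_diff_le diff_Suc_1 power_Suc2)

lemma alg1: "(A - m*(S + 2*X)) - 2*(B - m*(S+X)) + (C - m*S) = A - 2*B + (C::real)"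
  by (simp add: algebra_simps)

lemma DD_full: assumes "a \<le> b" "1 \<le> j" "1 \<le> q" "j*2^q \<le> b - a + 1"
  shows "DD ys a b q ((j-1)*2^q) = PS ys a (j*2^q) - 2 * PS ys a (j*2^q - 2^(q-1)) + PS ys a ((j-1)*2^q)"
proof -
  define s where "s = (j-1)*(2::nat)^q"
  have e1: "s + 2^q = j*2^q" unfolding s_def using assms(2)
    by (metis Suc_diff_le diff_Suc_1 mult_Suc add.commute)
  have e2: "s + 2^(q-1) = j*2^q - 2^(q-1)" using e1 pow_half[OF assms(3)] by simp
  have le1: "s \<le> b - a + 1" "s + 2^(q-1) \<le> b - a + 1" using e1 assms(4) pow_half[OF assms(3)] by linarith+
  have "DD ys a b q s = (PS ys a (s + 2^q) - avg ys a b * real (s + 2^q))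
      - 2 * (PS ys a (s + 2^(q-1)) - avg ys a b * real (s + 2^(q-1))) + (PS ys a s - avg ys a b * real s)"
    unfolding DD_def using le1 e1 assms(4) by (simp add: Wf_le)
  also have "real (s + 2^q) = real s + 2 * real ((2::nat)^(q-1))"
    using pow_half[OF assms(3)] by (metis mult.commute of_nat_add of_nat_mult of_nat_numeral)
  also have "real (s + 2^(q-1)) = real s + real ((2::nat)^(q-1))" by (rule of_nat_add)
  finally have "DD ys a b q s = PS ys a (s + 2^q) - 2 * PS ys a (s + 2^(q-1)) + PS ys a s"
    by (simp only: alg1)
  moreover have e3: "j*2^q - 2^(q-1) = s + 2^(q-1)" using e2 by simp
  ultimately show ?thesis using e1 unfolding s_def by metis
qed

lemma DD_zero: assumes "a \<le> b" "b - a + 1 \<le> s" shows "DD ys a b q s = 0"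
proof -
  have "Wf ys a b (s + 2^q) = 0" "Wf ys a b (s + 2^(q-1)) = 0" "Wf ys a b s = 0"
    using assms by (auto intro!: Wf_ge)
  then show ?thesis unfolding DD_def by simp
qed

lemma gf_zero: "0 \<le> lam \<Longrightarrow> gf lam p 0 = 0"
  by (simp add: gf_def)


lemma DD_part: assumes "a \<le> b" "1 \<le> q" "\<not> 2^q dvd (b - a + 1)"
  shows "gf lam (2^q) (DD ys a b q ((b-a+1) div 2^q * 2^q)) = Pt lam ys a (b-a+1) q"
proof -
  define m where "m = b - a + 1"
  define s where "s = m div 2^q * 2^q"
  have r0: "m mod 2^q \<noteq> 0" using assms(3) m_def by (simp add: dvd_eq_mod_eq_0)
  have r1: "m mod 2^q < 2^q" by simp
  have r2: "s + m mod 2^q = m" unfolding s_def by (rule div_mult_mod_eq)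
  have sl: "s < m" using r0 r2 by linarith
  have su: "m < s + 2^q" using r1 r2 by linarith
  have hh: "(2::nat)^q div 2 = 2^(q-1)" using pow_half[OF assms(2)] by (metis nonzero_mult_div_cancel_right zero_neq_numeral)
  have W1: "Wf ys a b (s + 2^q) = 0" using su assms(1) m_def by (intro Wf_ge) auto
  have W2: "Wf ys a b s = PS ys a s - avg ys a b * real s" using sl m_def by (intro Wf_le) auto
  have W3: "Wf ys a b (s + 2^(q-1)) = (if s + 2^(q-1) < m then PS ys a (s + 2^(q-1)) - avg ys a b * real (s + 2^(q-1)) else 0)"
    using Wf_le[of "s + 2^(q-1)" b a ys] Wf_ge[OF assms(1), of "s + 2^(q-1)" ys] m_def by auto
  have av: "avg ys a b = PS ys a m / real m" using avg_PS[OF assms(1)] m_def by simp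
  show ?thesis
    unfolding Pt_def Let_def m_def[symmetric] s_def[symmetric] hh DD_def W1 W2 W3 av
    by simp
qed





lemma div_mult_gt: "(0::nat) < p \<Longrightarrow> m < (m div p + 1) * p"
proof -
  assume p: "0 < p"
  have "m div p * p + m mod p = m" by (rule div_mult_mod_eq)
  moreover have "m mod p < p" using p by simp
  moreover have "(m div p + 1) * p = m div p * p + p" by (simp add: algebra_simps)
  ultimately show ?thesis by linarith
qed

lemma per_q: assumes ab: "a \<le> b" and q1: "1 \<le> q" and qL: "q \<le> L" and mL: "b - a + 1 \<le> 2^L" and lam: "0 \<le> lam"
  shows "(\<Sum>j=1..2^(L-q). gf lam (2^q) (DD ys a b q ((j-1)*2^q)))
       = (\<Sum>j=1..(b-a+1) div 2^q. GB lam ys a q j) + (if 2^q dvd (b-a+1) then 0 else Pt lam ys a (b-a+1) q)"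
proof -
  define m where "m = b - a + 1"
  define c where "c = m div 2^q"
  define N where "N = (2::nat)^(L-q)"
  have NL: "N * 2^q = 2^L" unfolding N_def using qL by (simp add: power_add[symmetric])
  have cm: "c * 2^q \<le> m" unfolding c_def by simp
  have cN: "c \<le> N" using cm mL NL m_def
    by (metis le_trans mult_le_cancel2 zero_less_numeral zero_less_power)
  have cgt: "m < (c+1) * 2^q" unfolding c_def by (rule div_mult_gt) simp
  have cN2: "c < N" if nd: "\<not> 2^q dvd m"
  proof -
    have "c * 2^q \<noteq> m" using nd by (metis dvd_triv_right)
    then have "c * 2^q < N * 2^q" using cm mL NL m_def by linarith
    then show ?thesis by simp
  qed
  define G where "G = (\<lambda>j. GB lam ys a q j)"
  define P where "P = Pt lam ys a m q"
  have pt: "gf lam (2^q) (DD ys a b q ((j-1)*2^q)) =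
      (if j \<le> c then G j else 0) + (if \<not> 2^q dvd m then (if j = c+1 then P else 0) else 0)"
    if j: "j \<in> {1..N}" for j
  proof -
    consider "j \<le> c" | "j = c + 1" | "c + 1 < j" by linarith
    then show ?thesis
    proof cases
      case 1
      have "j * 2^q \<le> c * 2^q" using 1 by simp
      then have "j * 2^q \<le> b - a + 1" using cm m_def by linarith
      then show ?thesis using 1 j DD_full[OF ab _ q1] by (simp add: G_def GB_def)
    next
      case 2
      show ?thesis
      proof (cases "2^q dvd m")
        case True
        have "(j-1)*2^q = m" using 2 True c_def by simp
        then show ?thesis using 2 True DD_zero[OF ab, of "(j-1)*2^q" ys q] gf_zero[OF lam] m_def by simp
      next
        case False
        have "(j-1)*2^q = (b-a+1) div 2^q * 2^q" using 2 c_def m_def by simp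
        then show ?thesis using 2 False DD_part[OF ab q1, of lam ys] P_def m_def by simp
      qed
    next
      case 3
      have "(c+1)*2^q \<le> (j-1)*2^q" using 3 by (intro mult_le_mono1) linarith
      then have "b - a + 1 \<le> (j-1)*2^q" using cgt m_def by linarith
      then show ?thesis using 3 DD_zero[OF ab, of "(j-1)*2^q" ys q] gf_zero[OF lam] by simp
    qed
  qed
  have "(\<Sum>j=1..N. gf lam (2^q) (DD ys a b q ((j-1)*2^q))) =
     (\<Sum>j=1..N. (if j \<le> c then G j else 0)) + (\<Sum>j=1..N. (if \<not> 2^q dvd m then (if j = c+1 then P else 0) else 0))"
    using pt by (simp add: sum.distrib)
  also have "(\<Sum>j=1..N. (if j \<le> c then G j else 0)) = (\<Sum>j=1..c. G j)"
  proof -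
    have "{1..N} \<inter> {..c} = {1..c}" using cN by auto
    then show ?thesis using sum.inter_restrict[of "{1..N}" G "{..c}"] by (simp only: finite_atLeastAtMost atMost_iff)
  qed
  also have "(\<Sum>j=1..N. (if \<not> 2^q dvd m then (if j = c+1 then P else 0) else 0)) = (if 2^q dvd m then 0 else P)"
    using cN2 by auto
  finally show ?thesis unfolding N_def G_def P_def c_def m_def .
qed




lemma soft_abs: "0 \<le> lam \<Longrightarrow> \<bar>soft_thr lam x\<bar> = max (\<bar>x\<bar> - lam) 0"
  by (auto simp: soft_thr_def sgn_if abs_mult max_def)

lemma term_eq: assumes "l < L"
  shows "(1 / sqrt (2^L)) * (2 powr (real l / 2) * max (\<bar>D / sqrt (2^(L-l))\<bar> - lam) 0) = gf lam (2^(L-l)) D"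
proof -
  have p: "(2::real) powr (real l / 2) = sqrt (2^l)"
    by (simp add: powr_half_sqrt_powr powr_realpow)
  have s: "sqrt ((2::real)^L) = sqrt (2^l) * sqrt (2^(L-l))"
    using assms by (simp add: real_sqrt_mult[symmetric] power_add[symmetric])
  have pos: "sqrt ((2::real)^l) > 0" by simp
  show ?thesis unfolding gf_def p s using pos by (simp add: abs_div)
qed

lemma reindex_rev: "(\<Sum>l<(L::nat). f (L - l)) = (\<Sum>q=1..L. (f q :: real))"
  by (rule sum.reindex_bij_witness[of _ "\<lambda>q. L - q" "\<lambda>l. L - l"]) auto

lemma split_iff:
  assumes ab: "a \<le> b" and lamd: "lam = \<sigma> * sqrt (\<beta> * ln (real n))" and lam: "0 \<le> lam"
  shows "split_test n \<sigma> \<beta> ys a b \<longleftrightarrow>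
     \<sigma> / sqrt (2 ^ nlev (b-a+1)) < FF lam ys a (b-a+1) +
        (\<Sum>q\<in>{q\<in>{1..nlev (b-a+1)}. \<not> 2^q dvd (b-a+1)}. Pt lam ys a (b-a+1) q)"
proof -
  define m where "m = b - a + 1"
  define L where "L = nlev m"
  have mL: "m \<le> 2^L" unfolding L_def by (rule nlev_ge)
  have Lm: "L \<le> m" unfolding L_def by (rule nlev_le_self)
  define f where "f = (\<lambda>q. (\<Sum>j=1..2^(L-q). gf lam (2^q) (DD ys a b q ((j-1)*2^q))))"
  have S1: "(1 / sqrt (real ((2::nat)^L))) * (\<Sum>l<L. 2 powr (real l / 2) *
          (\<Sum>j=1..2^l. \<bar>soft_thr lam (haar_detail (2^L) (pad0 ys a b) l j)\<bar>))
        = (\<Sum>l<L. f (L - l))"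
  proof -
    have "(1 / sqrt (real ((2::nat)^L))) * (\<Sum>l<L. 2 powr (real l / 2) *
          (\<Sum>j=1..2^l. \<bar>soft_thr lam (haar_detail (2^L) (pad0 ys a b) l j)\<bar>))
        = (\<Sum>l<L. \<Sum>j=1..2^l. (1 / sqrt (2^L)) * (2 powr (real l / 2) *
             \<bar>soft_thr lam (haar_detail (2^L) (pad0 ys a b) l j)\<bar>))"
      by (simp add: sum_distrib_left)
    also have "\<dots> = (\<Sum>l<L. f (L - l))"
    proof (rule sum.cong[OF refl])
      fix l assume l: "l \<in> {..<L}"
      then have lL: "l < L" by simp
      have "L - (L - l) = l" using lL by simp
      then have fl: "f (L - l) = (\<Sum>j=1..2^l. gf lam (2^(L-l)) (DD ys a b (L-l) ((j-1)*2^(L-l))))"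
        unfolding f_def by simp
      show "(\<Sum>j=1..2^l. (1 / sqrt (2^L)) * (2 powr (real l / 2) *
             \<bar>soft_thr lam (haar_detail (2^L) (pad0 ys a b) l j)\<bar>)) = f (L - l)"
        unfolding fl
      proof (rule sum.cong[OF refl])
        fix j assume "j \<in> {1..(2::nat)^l}"
        then have j1: "1 \<le> j" by simp
        show "(1 / sqrt (2^L)) * (2 powr (real l / 2) *
             \<bar>soft_thr lam (haar_detail (2^L) (pad0 ys a b) l j)\<bar>) =
             gf lam (2^(L-l)) (DD ys a b (L-l) ((j-1)*2^(L-l)))"
          unfolding haar_eq[OF lL j1] soft_abs[OF lam] by (rule term_eq[OF lL])
      qed
    qed
    finally show ?thesis .
  qed
  also have "(\<Sum>l<L. f (L - l)) = (\<Sum>q=1..L. f q)" by (rule reindex_rev)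
  also have "\<dots> = (\<Sum>q=1..L. (\<Sum>j=1..m div 2^q. GB lam ys a q j) + (if \<not> 2^q dvd m then Pt lam ys a m q else 0))"
    unfolding f_def m_def
    by (rule sum.cong[OF refl]) (subst per_q[OF ab _ _ _ lam, of _ L], insert mL m_def, auto)
  also have "\<dots> = (\<Sum>q=1..L. \<Sum>j=1..m div 2^q. GB lam ys a q j) + (\<Sum>q\<in>{q\<in>{1..L}. \<not> 2^q dvd m}. Pt lam ys a m q)"
  proof -
    have "(\<Sum>q=1..L. (if \<not> 2^q dvd m then Pt lam ys a m q else 0)) = (\<Sum>q\<in>{q\<in>{1..L}. \<not> 2^q dvd m}. Pt lam ys a m q)"
      by (rule sum.inter_filter[symmetric]) simp
    then show ?thesis by (simp only: sum.distrib)
  qed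
  also have "(\<Sum>q=1..L. \<Sum>j=1..m div 2^q. GB lam ys a q j) = FF lam ys a m"
    unfolding FF_def
  proof (rule sum.mono_neutral_left)
    show "\<forall>q\<in>{1..m} - {1..L}. (\<Sum>j=1..m div 2^q. GB lam ys a q j) = 0"
    proof
      fix q assume "q \<in> {1..m} - {1..L}"
      then have "L < q" by auto
      then have "(2::nat)^L < 2^q" by simp
      then have "m < 2^q" using mL by linarith
      then have "m div 2^q = 0" by simp
      then show "(\<Sum>j=1..m div 2^q. GB lam ys a q j) = 0" by simp
    qed
  qed (use Lm in auto)
  finally have S: "(1 / sqrt (real ((2::nat)^L))) * (\<Sum>l<L. 2 powr (real l / 2) *
          (\<Sum>j=1..2^l. \<bar>soft_thr lam (haar_detail (2^L) (pad0 ys a b) l j)\<bar>))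
       = FF lam ys a m + (\<Sum>q\<in>{q\<in>{1..L}. \<not> 2^q dvd m}. Pt lam ys a m q)" .
  show ?thesis
    unfolding split_test_def Let_def lamd[symmetric] m_def[symmetric] L_def[symmetric] S
    by auto
qed



lemma div_pred_dvd: assumes "0 < (p::nat)" "1 \<le> m" "p dvd m" shows "(m - 1) div p + 1 = m div p"
proof -
  obtain c where m: "m = p * c" using assms(3) by blast
  have c: "1 \<le> c" using assms(2) m by (cases c) auto
  have "(m - 1) div p = c - 1"
  proof (rule div_nat_eqI)
    show "p * (c - 1) \<le> m - 1" using c assms(1) m by (cases c) auto
    show "m - 1 < p * Suc (c - 1)" using c assms(1) m by (cases c) auto
  qed
  then show ?thesis using m c assms(1) by simp
qed
lemma div_pred_ndvd: assumes "0 < (p::nat)" "1 \<le> m" "\<not> p dvd m" shows "(m - 1) div p = m div p"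
proof (rule div_nat_eqI)
  have r: "m div p * p + m mod p = m" by (rule div_mult_mod_eq)
  have r1: "m mod p \<noteq> 0" using assms(3) by (simp add: dvd_eq_mod_eq_0)
  have r2: "m mod p < p" using assms(1) by simp
  have r3: "p * (m div p) + m mod p = m" using r by (simp add: mult.commute)
  show "p * (m div p) \<le> m - 1" using r3 r1 by linarith
  have "p * Suc (m div p) = p * (m div p) + p" by simp
  then show "m - 1 < p * Suc (m div p)" using r3 r2 by linarith
qed


lemma FF_step: assumes m1: "1 \<le> m"
  shows "FF lam ys a m = FF lam ys a (m-1) + (\<Sum>q\<in>{q\<in>{1..m}. 2^q dvd m}. GB lam ys a q (m div 2^q))"
proof -
  define G where "G = GB lam ys a"
  have A: "FF lam ys a (m-1) = (\<Sum>q=1..m. \<Sum>j=1..(m-1) div 2^q. G q j)"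
  proof -
    have "m - 1 < 2^m" using less_exp[of m] by linarith
    then have z: "(m-1) div 2^m = 0" by simp
    have "(\<Sum>q=1..m. \<Sum>j=1..(m-1) div 2^q. G q j) = (\<Sum>q=1..Suc (m-1). \<Sum>j=1..(m-1) div 2^q. G q j)"
      using m1 by simp
    also have "\<dots> = (\<Sum>q=1..m-1. \<Sum>j=1..(m-1) div 2^q. G q j) + (\<Sum>j=1..(m-1) div 2^(Suc (m-1)). G (Suc (m-1)) j)"
      by (rule sum.cl_ivl_Suc[THEN trans]) simp
    also have "(\<Sum>j=1..(m-1) div 2^(Suc (m-1)). G (Suc (m-1)) j) = 0" using z m1 by simp
    finally show ?thesis unfolding FF_def G_def by simp
  qed
  have B: "(\<Sum>j=1..m div 2^q. G q j) = (\<Sum>j=1..(m-1) div 2^q. G q j) + (if 2^q dvd m then G q (m div 2^q) else 0)" for q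
  proof (cases "2^q dvd m")
    case True
    have e: "m div 2^q = Suc ((m-1) div 2^q)" using div_pred_dvd[of "2^q" m] True m1 by simp
    show ?thesis unfolding e using True by (simp add: sum.cl_ivl_Suc)
  next
    case False
    have e: "(m-1) div 2^q = m div 2^q" using div_pred_ndvd[of "2^q" m] False m1 by simp
    show ?thesis unfolding e using False by simp
  qed
  have "FF lam ys a m = (\<Sum>q=1..m. (\<Sum>j=1..(m-1) div 2^q. G q j) + (if 2^q dvd m then G q (m div 2^q) else 0))"
    unfolding FF_def G_def[symmetric] using B by simp
  also have "\<dots> = FF lam ys a (m-1) + (\<Sum>q=1..m. (if 2^q dvd m then G q (m div 2^q) else 0))"
    unfolding A by (simp add: sum.distrib)
  also have "(\<Sum>q=1..m. (if 2^q dvd m then G q (m div 2^q) else 0)) = (\<Sum>q\<in>{q\<in>{1..m}. 2^q dvd m}. G q (m div 2^q))"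
    by (rule sum.inter_filter[symmetric]) simp
  finally show ?thesis unfolding G_def .
qed


definition ex :: "com \<Rightarrow> state \<Rightarrow> (nat \<Rightarrow> state \<Rightarrow> bool) \<Rightarrow> bool" where
  "ex c s Q \<longleftrightarrow> (\<exists>t s'. big_step (c, s) t s' \<and> Q t s')"

lemma ex_Skip: "Q 1 s \<Longrightarrow> ex Skip s Q"
  unfolding ex_def using SkipB by blast
lemma ex_NStore: "Q (1 + ncost a + ncost e) (s\<lparr>nmem := (nmem s)(nval a s := nval e s)\<rparr>) \<Longrightarrow> ex (NStore a e) s Q"
  unfolding ex_def using NStoreB by blast
lemma ex_RStore: "Q (1 + ncost a + rcost e) (s\<lparr>rmem := (rmem s)(nval a s := rval e s)\<rparr>) \<Longrightarrow> ex (RStore a e) s Q"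
  unfolding ex_def using RStoreB by blast
lemma ex_Seq: "ex c1 s (\<lambda>t1 s1. ex c2 s1 (\<lambda>t2 s2. Q (t1 + t2) s2)) \<Longrightarrow> ex (Seq c1 c2) s Q"
  unfolding ex_def using SeqB by blast
lemma ex_If: "(bval b s \<Longrightarrow> ex c1 s (\<lambda>t. Q (1 + bcost b + t))) \<Longrightarrow> (\<not> bval b s \<Longrightarrow> ex c2 s (\<lambda>t. Q (1 + bcost b + t)))
   \<Longrightarrow> ex (If b c1 c2) s Q"
  unfolding ex_def using IfTrueB IfFalseB by blast
lemma ex_Read: "inp s \<noteq> [] \<Longrightarrow> Q (1 + ncost a) (s\<lparr>rmem := (rmem s)(nval a s := hd (inp s)), inp := tl (inp s), trace := trace s @ [ReadEv]\<rparr>)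
   \<Longrightarrow> ex (Read a) s Q"
  unfolding ex_def using ReadB[of s "hd (inp s)" "tl (inp s)" a] by (cases "inp s") auto
lemma ex_Write: "Q (1 + rcost e) (s\<lparr>trace := trace s @ [OutEv (rval e s)]\<rparr>) \<Longrightarrow> ex (Write e) s Q"
  unfolding ex_def using WriteB by blast
lemma ex_mono: "ex c s Q \<Longrightarrow> (\<And>t s'. Q t s' \<Longrightarrow> R t s') \<Longrightarrow> ex c s R"
  unfolding ex_def by blast

lemma ex_While:
  assumes step: "\<And>s. I s \<Longrightarrow> bval b s \<Longrightarrow> ex c s (\<lambda>t s'. I s' \<and> f s' < f s \<and> t \<le> K)"
  shows "I s \<Longrightarrow> ex (While b c) s (\<lambda>t s'. I s' \<and> \<not> bval b s' \<and> t \<le> (1 + bcost b + K) * f s + 1 + bcost b)"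
proof (induction "f s" arbitrary: s rule: less_induct)
  case less
  show ?case
  proof (cases "bval b s")
    case False
    then show ?thesis unfolding ex_def using WhileFalseB less.prems by fastforce
  next
    case True
    obtain t1 s1 where b1: "big_step (c, s) t1 s1" and i1: "I s1" and f1: "f s1 < f s" and k1: "t1 \<le> K"
      using step[OF less.prems True] unfolding ex_def by blast
    obtain t2 s2 where b2: "big_step (While b c, s1) t2 s2" and i2: "I s2" and nb: "\<not> bval b s2"
      and k2: "t2 \<le> (1 + bcost b + K) * f s1 + 1 + bcost b"
      using less.hyps[OF f1 i1] unfolding ex_def by blast
    have "(1 + bcost b + K) * (f s1 + 1) \<le> (1 + bcost b + K) * f s" using f1 by (intro mult_le_mono2) simp
    then have "1 + bcost b + t1 + t2 \<le> (1 + bcost b + K) * f s + 1 + bcost b" using k1 k2 by (simp add: algebra_simps)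
    then show ?thesis unfolding ex_def using WhileTrueB[OF True b1 b2] i2 nb by blast
  qed
qed

lemmas ex_rules = ex_Skip ex_NStore ex_RStore ex_Seq ex_If ex_Read ex_Write

abbreviation nv :: "nat \<Rightarrow> nexp" where "nv i \<equiv> NLd (NC i)"
abbreviation rv :: "nat \<Rightarrow> rexp" where "rv i \<equiv> RLd (NC i)"
abbreviation Rarr :: "nexp \<Rightarrow> rexp" where "Rarr e \<equiv> RLd (NPlus (NC 10) e)"

definition gupd :: "nat \<Rightarrow> com" where
  "gupd cell = Seq (RStore (NC 9) (RMinus (RDivide (RAbs (rv 8)) (RSqrt (ROfNat (nv 6)))) (rv 3)))
     (If (BRLess (RC 0) (rv 9)) (RStore (NC cell) (RPlus (rv cell) (RDivide (rv 9) (RSqrt (ROfNat (nv 6)))))) Skip)"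

lemma gupd_ex: assumes "cell \<noteq> 9"
  shows "ex (gupd cell) s (\<lambda>t s'. t \<le> 40 \<and> s' = s\<lparr>rmem := (rmem s)(9 := \<bar>rmem s 8\<bar> / sqrt (real (nmem s 6)) - rmem s 3,
          cell := rmem s cell + gf (rmem s 3) (real (nmem s 6)) (rmem s 8))\<rparr>)"
  unfolding gupd_def
  apply (intro ex_rules)
  using assms apply (auto simp: gf_def fun_upd_twist)
  done

abbreviation "sbE \<equiv> NTimes (NDiv (nv 4) (nv 6)) (nv 6)"
abbreviation "hbE \<equiv> NDiv (nv 6) (NC 2)"

definition partial_c :: com where
  "partial_c = Seq (RStore (NC 8) (RMinus (Rarr sbE) (RTimes (rv 6) (ROfNat sbE))))
     (Seq (If (BNLess (NPlus sbE hbE) (nv 4))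
            (RStore (NC 8) (RMinus (rv 8) (RTimes (RC 2) (RMinus (Rarr (NPlus sbE hbE)) (RTimes (rv 6) (ROfNat (NPlus sbE hbE))))))) Skip)
       (gupd 5))"

definition full_c :: com where
  "full_c = Seq (RStore (NC 8) (RPlus (RMinus (Rarr (nv 4)) (RTimes (RC 2) (Rarr (NMinus (nv 4) hbE)))) (Rarr (NMinus (nv 4) (nv 6)))))
     (gupd 4)"

definition inner_body :: com where
  "inner_body = Seq (If (BNLess (NC 0) (NMod (nv 4) (nv 6))) partial_c full_c)
     (Seq (NStore (NC 5) (NPlus (nv 5) (NC 1))) (NStore (NC 6) (NTimes (nv 6) (NC 2))))"

definition Dfull :: "state \<Rightarrow> real" where
  "Dfull s = (let m = nmem s 4; p = nmem s 6; R = (\<lambda>i. rmem s (10 + i)) in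
     R m - 2 * R (m - p div 2) + R (m - p))"

definition Dpart :: "state \<Rightarrow> real" where
  "Dpart s = (let m = nmem s 4; p = nmem s 6; R = (\<lambda>i. rmem s (10 + i)); mu = rmem s 6;
     sb = m div p * p; h = p div 2 in
     (if sb + h < m then (R sb - mu * real sb) - 2 * (R (sb + h) - mu * real (sb + h)) else R sb - mu * real sb))"

lemma full_ex: "ex full_c s (\<lambda>t s'. t \<le> 100 \<and> s' = s\<lparr>rmem := (rmem s)(8 := Dfull s, 9 := \<bar>Dfull s\<bar> / sqrt (real (nmem s 6)) - rmem s 3,
          4 := rmem s 4 + gf (rmem s 3) (real (nmem s 6)) (Dfull s))\<rparr>)"
  unfolding full_c_def
  apply (intro ex_rules)
  apply (rule ex_mono[OF gupd_ex])
   apply simp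
  apply (auto simp: Dfull_def Let_def fun_upd_twist)
  done

lemma partial_ex: "ex partial_c s (\<lambda>t s'. t \<le> 200 \<and> s' = s\<lparr>rmem := (rmem s)(8 := Dpart s, 9 := \<bar>Dpart s\<bar> / sqrt (real (nmem s 6)) - rmem s 3,
          5 := rmem s 5 + gf (rmem s 3) (real (nmem s 6)) (Dpart s))\<rparr>)"
  unfolding partial_c_def
  apply (intro ex_rules)
   apply (rule ex_mono[OF gupd_ex], simp)
   apply (auto simp: Dpart_def Let_def fun_upd_twist)[1]
  apply (rule ex_mono[OF gupd_ex], simp)
  apply (auto simp: Dpart_def Let_def fun_upd_twist)
  done

definition body_post :: "state \<Rightarrow> nat \<Rightarrow> state \<Rightarrow> bool" where
  "body_post s t s' \<longleftrightarrow> t \<le> 300 \<and> nmem s' = (nmem s)(5 := nmem s 5 + 1, 6 := nmem s 6 * 2) \<and> inp s' = inp s \<and> trace s' = trace s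
     \<and> (\<forall>i. i \<notin> {4,5,8,9} \<longrightarrow> rmem s' i = rmem s i)
     \<and> rmem s' 4 = rmem s 4 + (if nmem s 4 mod nmem s 6 = 0 then gf (rmem s 3) (real (nmem s 6)) (Dfull s) else 0)
     \<and> rmem s' 5 = rmem s 5 + (if nmem s 4 mod nmem s 6 = 0 then 0 else gf (rmem s 3) (real (nmem s 6)) (Dpart s))"

lemma inner_body_ex: "ex inner_body s (body_post s)"
  unfolding inner_body_def
  apply (rule ex_Seq)
  apply (rule ex_If)
   apply (rule ex_mono[OF partial_ex])
   apply (elim conjE, hypsubst)
   apply (intro ex_rules)
   apply (simp add: body_post_def)
  apply (rule ex_mono[OF full_ex])
  apply (elim conjE, hypsubst)
  apply (intro ex_rules)
  apply (simp add: body_post_def)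
  done

definition inner_loop :: com where
  "inner_loop = While (BNLess (nv 6) (NTimes (NC 2) (nv 4))) inner_body"

lemma loop_cond: assumes "1 \<le> q" shows "((2::nat)^q < 2*m) = (q \<le> nlev m)"
proof -
  have e: "(2::nat)^q = 2 * 2^(q-1)" using pow_half[OF assms] by simp
  have "((2::nat)^q < 2*m) = (\<not> m \<le> 2^(q-1))" unfolding e by auto
  also have "\<dots> = (\<not> nlev m \<le> q - 1)" by (simp add: nlev_iff)
  also have "\<dots> = (q \<le> nlev m)" using assms by auto
  finally show ?thesis .
qed

lemma sum_filter_Suc: "1 \<le> q \<Longrightarrow> (\<Sum>x\<in>{x\<in>{1..<Suc q}. P x}. g x) = (\<Sum>x\<in>{x\<in>{1..<q}. P x}. g x) + (if P q then g q else (0::real))"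
proof -
  assume q: "1 \<le> q"
  have "{x\<in>{1..<Suc q}. P x} = (if P q then insert q {x\<in>{1..<q}. P x} else {x\<in>{1..<q}. P x})"
    using q by (auto simp: less_Suc_eq)
  then show ?thesis by (simp add: add.commute)
qed

definition inner_post :: "nat \<Rightarrow> real \<Rightarrow> real list \<Rightarrow> nat \<Rightarrow> state \<Rightarrow> nat \<Rightarrow> state \<Rightarrow> bool" where
  "inner_post m lam ys a s t s' \<longleftrightarrow> t \<le> 400 * nlev m + 400
     \<and> nmem s' = (nmem s)(5 := nlev m + 1, 6 := 2^(nlev m + 1))
     \<and> rmem s' 4 = rmem s 4 + (\<Sum>q\<in>{q\<in>{1..m}. 2^q dvd m}. GB lam ys a q (m div 2^q))
     \<and> rmem s' 5 = (\<Sum>q\<in>{q\<in>{1..nlev m}. \<not> 2^q dvd m}. Pt lam ys a m q)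
     \<and> (\<forall>i. i \<notin> {4,5,8,9} \<longrightarrow> rmem s' i = rmem s i) \<and> inp s' = inp s \<and> trace s' = trace s"

lemma inner_ex:
  assumes A: "nmem s 4 = m" "1 \<le> m" "nmem s 5 = 1" "nmem s 6 = 2" "rmem s 3 = lam"
    "rmem s 6 = PS ys a m / real m" "rmem s 5 = 0" "\<forall>i\<le>m. rmem s (10+i) = PS ys a i"
  shows "ex inner_loop s (inner_post m lam ys a s)"
proof -
  define L where "L = nlev m"
  define I where "I = (\<lambda>s'::state. \<exists>q. 1 \<le> q \<and> q \<le> L + 1 \<and> nmem s' = (nmem s)(5 := q, 6 := 2^q)
     \<and> rmem s' 4 = rmem s 4 + (\<Sum>x\<in>{x\<in>{1..<q}. 2^x dvd m}. GB lam ys a x (m div 2^x))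
     \<and> rmem s' 5 = (\<Sum>x\<in>{x\<in>{1..<q}. \<not> 2^x dvd m}. Pt lam ys a m x)
     \<and> (\<forall>i. i \<notin> {4,5,8,9} \<longrightarrow> rmem s' i = rmem s i) \<and> inp s' = inp s \<and> trace s' = trace s)"
  define f where "f = (\<lambda>s'::state. L + 1 - nmem s' 5)"
  let ?b = "BNLess (nv 6) (NTimes (NC 2) (nv 4))"
  have I0: "I s"
    unfolding I_def using A by (intro exI[of _ 1]) (auto simp: fun_upd_triv)
  have f0: "f s = L" unfolding f_def using A by simp
  have step: "ex inner_body s' (\<lambda>t s''. I s'' \<and> f s'' < f s' \<and> t \<le> 300)" if I': "I s'" and bv: "bval ?b s'" for s'
  proof -
    obtain q where q1: "1 \<le> q" and qL1: "q \<le> L + 1" and nm: "nmem s' = (nmem s)(5 := q, 6 := 2^q)"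
      and r4: "rmem s' 4 = rmem s 4 + (\<Sum>x\<in>{x\<in>{1..<q}. 2^x dvd m}. GB lam ys a x (m div 2^x))"
      and r5: "rmem s' 5 = (\<Sum>x\<in>{x\<in>{1..<q}. \<not> 2^x dvd m}. Pt lam ys a m x)"
      and fr: "\<forall>i. i \<notin> {4,5,8,9} \<longrightarrow> rmem s' i = rmem s i" and ip: "inp s' = inp s" and tr: "trace s' = trace s"
      using I' unfolding I_def by blast
    have m4: "nmem s' 4 = m" "nmem s' 6 = 2^q" "nmem s' 5 = q" using nm A by auto
    have "2^q < 2*m" using bv m4 by simp
    then have qL: "q \<le> L" using loop_cond[OF q1] L_def by simp
    have R: "rmem s' (10 + i) = PS ys a i" if "i \<le> m" for i using fr A(8) that by simp
    have lam': "rmem s' 3 = lam" "rmem s' 6 = PS ys a m / real m" using fr A by auto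
    have hh: "(2::nat)^q div 2 = 2^(q-1)" using pow_half[OF q1] by (metis nonzero_mult_div_cancel_right zero_neq_numeral)
    have full: "gf lam (real (2^q)) (Dfull s') = GB lam ys a q (m div 2^q)" if d: "2^q dvd m"
    proof -
      have e1: "m div 2^q * 2^q = m" using d by simp
      have e2: "(m div 2^q - 1) * 2^q = m - 2^q" using e1 by (simp add: diff_mult_distrib)
      have "Dfull s' = PS ys a m - 2 * PS ys a (m - 2^(q-1)) + PS ys a (m - 2^q)"
        unfolding Dfull_def Let_def m4 hh by (simp add: R)
      then show ?thesis unfolding GB_def e1 e2 by simp
    qed
    have part: "gf lam (real (2^q)) (Dpart s') = Pt lam ys a m q"
    proof -
      define sb where "sb = m div 2^q * 2^q"
      have sbm: "sb \<le> m" unfolding sb_def by simp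
      have "Dpart s' = (if sb + 2^(q-1) < m then (PS ys a sb - PS ys a m / real m * real sb)
            - 2 * (PS ys a (sb + 2^(q-1)) - PS ys a m / real m * real (sb + 2^(q-1)))
           else PS ys a sb - PS ys a m / real m * real sb)"
        unfolding Dpart_def Let_def m4 hh sb_def[symmetric] lam' using sbm by (simp add: R)
      then show ?thesis unfolding Pt_def Let_def hh sb_def[symmetric] by simp
    qed
    show ?thesis
    proof (rule ex_mono[OF inner_body_ex])
      fix t s'' assume bp: "body_post s' t s''"
      have "I s''" unfolding I_def
      proof (intro exI[of _ "Suc q"] conjI)
        show "1 \<le> Suc q" "Suc q \<le> L + 1" using qL by auto
        show "nmem s'' = (nmem s)(5 := Suc q, 6 := 2 ^ Suc q)" using bp nm unfolding body_post_def by (simp add: mult.commute)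
        show "rmem s'' 4 = rmem s 4 + (\<Sum>x\<in>{x\<in>{1..<Suc q}. 2^x dvd m}. GB lam ys a x (m div 2^x))"
          using bp r4 full m4 lam' unfolding body_post_def sum_filter_Suc[OF q1] by (auto simp: dvd_eq_mod_eq_0)
        show "rmem s'' 5 = (\<Sum>x\<in>{x\<in>{1..<Suc q}. \<not> 2^x dvd m}. Pt lam ys a m x)"
          using bp r5 part m4 lam' unfolding body_post_def sum_filter_Suc[OF q1] by (auto simp: dvd_eq_mod_eq_0)
        show "\<forall>i. i \<notin> {4,5,8,9} \<longrightarrow> rmem s'' i = rmem s i" using bp fr unfolding body_post_def by simp
        show "inp s'' = inp s" "trace s'' = trace s" using bp ip tr unfolding body_post_def by simp_all
      qed
      moreover have "f s'' < f s'" using bp m4 qL unfolding body_post_def f_def by simp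
      moreover have "t \<le> 300" using bp unfolding body_post_def by simp
      ultimately show "I s'' \<and> f s'' < f s' \<and> t \<le> 300" by blast
    qed
  qed
  show ?thesis
    unfolding inner_loop_def
  proof (rule ex_mono[OF ex_While[of I ?b inner_body f 300, OF step I0]])
    fix t s' assume H: "I s' \<and> \<not> bval ?b s' \<and> t \<le> (1 + bcost ?b + 300) * f s + 1 + bcost ?b"
    obtain q where q1: "1 \<le> q" and qL1: "q \<le> L + 1" and nm: "nmem s' = (nmem s)(5 := q, 6 := 2^q)"
      and r4: "rmem s' 4 = rmem s 4 + (\<Sum>x\<in>{x\<in>{1..<q}. 2^x dvd m}. GB lam ys a x (m div 2^x))"
      and r5: "rmem s' 5 = (\<Sum>x\<in>{x\<in>{1..<q}. \<not> 2^x dvd m}. Pt lam ys a m x)"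
      and fr: "\<forall>i. i \<notin> {4,5,8,9} \<longrightarrow> rmem s' i = rmem s i" and ip: "inp s' = inp s" and tr: "trace s' = trace s"
      using H unfolding I_def by blast
    have "\<not> 2^q < 2*m" using H nm A by simp
    then have qe: "q = L + 1" using loop_cond[OF q1] L_def qL1 by simp
    have mL: "m \<le> 2^L" unfolding L_def by (rule nlev_ge)
    have Lm: "L \<le> m" unfolding L_def by (rule nlev_le_self)
    have set1: "{x\<in>{1..<q}. 2^x dvd m} = {q\<in>{1..m}. 2^q dvd m}"
    proof -
      have "x \<le> L" if "1 \<le> x" "2^x dvd m" for x
      proof -
        have "2^x \<le> m" using that A(2) by (simp add: dvd_imp_le)
        then have "(2::nat)^x \<le> 2^L" using mL by linarith
        then show ?thesis by simp
      qed
      moreover have "x \<le> m" if "2^x dvd m" for x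
      proof -
        have "2^x \<le> m" using that A(2) by (simp add: dvd_imp_le)
        then show ?thesis using less_exp[of x] by linarith
      qed
      ultimately show ?thesis using qe Lm by (auto simp: less_Suc_eq_le)
    qed
    have set2: "{x\<in>{1..<q}. \<not> 2^x dvd m} = {q\<in>{1..L}. \<not> 2^q dvd m}" using qe by auto
    show "inner_post m lam ys a s t s'"
      unfolding inner_post_def
    proof (intro conjI)
      show "t \<le> 400 * nlev m + 400" using H f0 L_def by simp
      show "nmem s' = (nmem s)(5 := nlev m + 1, 6 := 2 ^ (nlev m + 1))" using nm qe L_def by simp
    qed (use r4 r5 set1 set2 L_def fr ip tr in auto)
  qed
qed


definition pre_c :: com where
 "pre_c = Seq (If (BNLess (NC 0) (nv 3)) (Write (rv 7)) (Write (RDivide (Rarr (NMinus (nv 1) (nv 2))) (ROfNat (NMinus (nv 1) (nv 2))))))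
 (Seq (NStore (NC 3) (NC 0))
 (Seq (Read (NC 7))
 (Seq (NStore (NC 4) (NPlus (NMinus (nv 1) (nv 2)) (NC 1)))
 (Seq (RStore (NPlus (NC 10) (nv 4)) (RPlus (Rarr (NMinus (nv 4) (NC 1))) (rv 7)))
 (Seq (RStore (NC 6) (RDivide (Rarr (nv 4)) (ROfNat (nv 4))))
 (Seq (RStore (NC 5) (RC 0))
 (Seq (NStore (NC 5) (NC 1))
      (NStore (NC 6) (NC 2)))))))))"

definition pre_state :: "state \<Rightarrow> state" where
 "pre_state s = (let t = nmem s 1; a = nmem s 2; m = t - a + 1; y = hd (inp s);
     Rm = rmem s (10 + (t - a)) + y in
   s\<lparr>nmem := (nmem s)(3 := 0, 4 := m, 5 := 1, 6 := 2),
     rmem := (rmem s)(7 := y, 10 + m := Rm, 6 := Rm / real m, 5 := 0),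
     inp := tl (inp s),
     trace := trace s @ [OutEv (if 0 < nmem s 3 then rmem s 7 else rmem s (10 + (t - a)) / real (t - a)), ReadEv]\<rparr>)"

lemma pre_ex: "inp s \<noteq> [] \<Longrightarrow> ex pre_c s (\<lambda>t s'. t \<le> 200 \<and> s' = pre_state s)"
  unfolding pre_c_def
  apply (rule ex_Seq, rule ex_If)
   apply (rule ex_rules, simp?)+
   apply (simp add: pre_state_def Let_def)
  apply (rule ex_rules, simp?)+
  apply (simp add: pre_state_def Let_def)
  done

definition post_c :: com where
 "post_c = Seq (If (BRLess (RDivide (rv 0) (RSqrt (ROfNat (NDiv (nv 6) (NC 2))))) (RPlus (rv 4) (rv 5)))
      (Seq (NStore (NC 3) (NC 1)) (Seq (NStore (NC 2) (NPlus (nv 1) (NC 1))) (RStore (NC 4) (RC 0))))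
      Skip)
   (NStore (NC 1) (NPlus (nv 1) (NC 1)))"

definition post_state :: "state \<Rightarrow> state" where
 "post_state s = (if rmem s 0 / sqrt (real (nmem s 6 div 2)) < rmem s 4 + rmem s 5
    then s\<lparr>nmem := (nmem s)(3 := 1, 2 := nmem s 1 + 1, 1 := nmem s 1 + 1), rmem := (rmem s)(4 := 0)\<rparr>
    else s\<lparr>nmem := (nmem s)(1 := nmem s 1 + 1)\<rparr>)"

lemma post_ex: "ex post_c s (\<lambda>t s'. t \<le> 100 \<and> s' = post_state s)"
  unfolding post_c_def
  apply (rule ex_Seq, rule ex_If)
   apply (rule ex_rules, simp?)+
   apply (simp add: post_state_def Let_def)
  apply (rule ex_rules, simp?)+
  apply (simp add: post_state_def Let_def)
  done

definition outer_body :: com where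
  "outer_body = Seq pre_c (Seq inner_loop post_c)"

lemma outer_body_ex:
  assumes "inp s \<noteq> []"
    and inner: "\<And>t s'. inner_post (nmem s 1 - nmem s 2 + 1) lam ys a (pre_state s) t s' \<Longrightarrow> QI t s'"
    and pre: "ex inner_loop (pre_state s) (inner_post (nmem s 1 - nmem s 2 + 1) lam ys a (pre_state s))"
    and fin: "\<And>t1 t2 t3 s2. t1 \<le> 200 \<Longrightarrow> QI t2 s2 \<Longrightarrow> t3 \<le> 100 \<Longrightarrow> Q (t1 + (t2 + t3)) (post_state s2)"
  shows "ex outer_body s Q"
  unfolding outer_body_def
  apply (rule ex_Seq)
  apply (rule ex_mono[OF pre_ex[OF assms(1)]])
  apply (elim conjE, hypsubst)
  apply (rule ex_Seq)
  apply (rule ex_mono[OF pre])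
  apply (rule ex_mono[OF post_ex])
  apply (elim conjE, hypsubst)
  apply (rule fin)
    apply assumption
   apply (erule inner)
  apply assumption
  done


definition OI :: "nat \<Rightarrow> real \<Rightarrow> real \<Rightarrow> real list \<Rightarrow> real \<Rightarrow> state \<Rightarrow> bool" where
  "OI n \<sigma> \<beta> ys lam s \<longleftrightarrow>
    nmem s 0 = n \<and> 1 \<le> nmem s 1 \<and> nmem s 1 \<le> n + 1 \<and>
    arrows_state n \<sigma> \<beta> ys (nmem s 1 - 1) = (nmem s 2, 0 < nmem s 3) \<and>
    rmem s 0 = \<sigma> \<and> rmem s 3 = lam \<and> rmem s 7 = obs ys (nmem s 1 - 1) \<and>
    rmem s 4 = FF lam ys (nmem s 2) (nmem s 1 - nmem s 2) \<and>
    (\<forall>i \<le> nmem s 1 - nmem s 2. rmem s (10 + i) = PS ys (nmem s 2) i) \<and>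
    inp s = drop (nmem s 1 - 1) ys \<and>
    trace s = concat (map (\<lambda>t. [OutEv (arrows_pred n \<sigma> \<beta> ys t), ReadEv]) [1..<nmem s 1])"

lemma arrows_state_props:
  "1 \<le> fst (arrows_state n \<sigma> \<beta> ys t) \<and> fst (arrows_state n \<sigma> \<beta> ys t) \<le> t + 1 \<and>
   (snd (arrows_state n \<sigma> \<beta> ys t) \<longleftrightarrow> fst (arrows_state n \<sigma> \<beta> ys t) = t + 1)"
  by (induction t) (auto simp: Let_def)

lemma nlev_mono: "m \<le> n \<Longrightarrow> nlev m \<le> nlev n"
  using nlev_ge[of n] nlev_iff[of m "nlev n"] by linarith

lemma outer_step:
  assumes OI: "OI n \<sigma> \<beta> ys lam s" and tn: "nmem s 1 < n + 1" and len: "length ys = n"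
    and lamd: "lam = \<sigma> * sqrt (\<beta> * ln (real n))" and lam0: "0 \<le> lam"
  shows "ex outer_body s (\<lambda>t' s'. OI n \<sigma> \<beta> ys lam s' \<and> nmem s' 1 = nmem s 1 + 1 \<and> t' \<le> 400 * nlev n + 1000)"
proof -
  define t where "t = nmem s 1"
  define a where "a = nmem s 2"
  define nb where "nb = (0 < nmem s 3)"
  define m where "m = t - a + 1"
  have st: "arrows_state n \<sigma> \<beta> ys (t - 1) = (a, nb)" using OI unfolding OI_def t_def a_def nb_def by simp
  have t1: "1 \<le> t" "t \<le> n" using OI tn unfolding OI_def t_def by auto
  have pa: "1 \<le> a" "a \<le> t" "nb \<longleftrightarrow> a = t" using arrows_state_props[of n \<sigma> \<beta> ys "t-1"] st t1 by auto
  have m1: "1 \<le> m" "m \<le> n" using t1 pa unfolding m_def by auto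
  have inp: "inp s = drop (t-1) ys" using OI unfolding OI_def t_def by simp
  have inpne: "inp s \<noteq> []" using inp t1 len by simp
  have hd: "hd (inp s) = obs ys t" using inp t1 len by (simp add: hd_drop_conv_nth obs_def)
  have tl: "tl (inp s) = drop t ys" using inp t1 by (simp add: drop_Suc[symmetric] tl_drop) 
  have R0: "\<forall>i \<le> t - a. rmem s (10 + i) = PS ys a i" using OI unfolding OI_def t_def a_def by simp
  have r4: "rmem s 4 = FF lam ys a (t - a)" using OI unfolding OI_def t_def a_def by simp
  have r037: "rmem s 0 = \<sigma>" "rmem s 3 = lam" "rmem s 7 = obs ys (t - 1)" using OI unfolding OI_def t_def by auto
  have n0: "nmem s 0 = n" using OI unfolding OI_def by simp
  have tr: "trace s = concat (map (\<lambda>t. [OutEv (arrows_pred n \<sigma> \<beta> ys t), ReadEv]) [1..<t])"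
    using OI unfolding OI_def t_def by simp
  define s1 where "s1 = pre_state s"
  have Rm: "rmem s (10 + (t - a)) + obs ys t = PS ys a m"
  proof -
    have "rmem s (10 + (t - a)) = PS ys a (t - a)" using R0 by blast
    moreover have "m = Suc (t - a)" "a + (t - a) = t" using pa unfolding m_def by auto
    ultimately show ?thesis by (simp add: PS_Suc)
  qed
  have s1n: "nmem s1 = (nmem s)(3 := 0, 4 := m, 5 := 1, 6 := 2)"
    unfolding s1_def pre_state_def Let_def t_def a_def m_def by simp
  have s1r: "rmem s1 = (rmem s)(7 := obs ys t, 10 + m := PS ys a m, 6 := PS ys a m / real m, 5 := 0)"
    unfolding s1_def pre_state_def Let_def hd Rm[unfolded m_def] t_def[symmetric] a_def[symmetric] m_def[symmetric]
    by (simp add: m_def)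
  have s1i: "inp s1 = drop t ys" unfolding s1_def pre_state_def Let_def tl by simp
  have pred: "(if 0 < nmem s 3 then rmem s 7 else rmem s (10 + (t - a)) / real (t - a)) = arrows_pred n \<sigma> \<beta> ys t"
  proof (cases nb)
    case True then show ?thesis using st r037 nb_def unfolding arrows_pred_def by simp
  next
    case False
    then have at: "a < t" using pa by simp
    have e: "t - 1 - a + 1 = t - a" using at by simp
    have "avg ys a (t - 1) = PS ys a (t - a) / real (t - a)" using avg_PS[of a "t-1" ys] at unfolding e by simp
    moreover have "rmem s (10 + (t - a)) = PS ys a (t - a)" using R0 by blast
    ultimately show ?thesis using False st nb_def at unfolding arrows_pred_def by simp
  qed
  have s1t: "trace s1 = trace s @ [OutEv (arrows_pred n \<sigma> \<beta> ys t), ReadEv]"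
  proof -
    have pred': "(if 0 < nmem s 3 then rmem s 7 else rmem s (10 + (nmem s 1 - nmem s 2)) / real (nmem s 1 - nmem s 2))
       = arrows_pred n \<sigma> \<beta> ys t" using pred unfolding t_def a_def .
    show ?thesis unfolding s1_def pre_state_def Let_def pred' by simp
  qed
  have R1: "\<forall>i\<le>m. rmem s1 (10 + i) = PS ys a i"
  proof (intro allI impI)
    fix i assume i: "i \<le> m"
    show "rmem s1 (10 + i) = PS ys a i"
    proof (cases "i = m")
      case True then show ?thesis unfolding s1r by simp
    next
      case False then have "i \<le> t - a" using i m_def by simp
      then show ?thesis unfolding s1r using R0 False by simp
    qed
  qed
  have inner: "ex inner_loop s1 (inner_post m lam ys a s1)"
    by (rule inner_ex) (use s1n s1r R1 m1 r037 in auto)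
  show ?thesis
  proof (rule outer_body_ex[OF inpne, where lam=lam and ys=ys and a=a and QI="inner_post m lam ys a s1"])
    show "ex inner_loop (pre_state s) (inner_post (nmem s 1 - nmem s 2 + 1) lam ys a (pre_state s))"
      using inner s1_def m_def t_def a_def by simp
  next
    fix t2 s2 assume "inner_post (nmem s 1 - nmem s 2 + 1) lam ys a (pre_state s) t2 s2"
    then show "inner_post m lam ys a s1 t2 s2" using s1_def m_def t_def a_def by simp
  next
    fix t1 t2 t3 s2 assume c1: "t1 \<le> (200::nat)" and ip: "inner_post m lam ys a s1 t2 s2" and c3: "t3 \<le> (100::nat)"
    define L where "L = nlev m"
    have c2: "t2 \<le> 400 * L + 400" using ip unfolding inner_post_def L_def by simp
    have s2n: "nmem s2 = (nmem s1)(5 := L + 1, 6 := 2^(L+1))" using ip unfolding inner_post_def L_def by simp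
    have s2fr: "\<forall>i. i \<notin> {4,5,8,9} \<longrightarrow> rmem s2 i = rmem s1 i" using ip unfolding inner_post_def by simp
    have s2io: "inp s2 = inp s1" "trace s2 = trace s1" using ip unfolding inner_post_def by simp_all
    have s24: "rmem s2 4 = FF lam ys a m"
    proof -
      have "rmem s2 4 = rmem s1 4 + (\<Sum>q\<in>{q\<in>{1..m}. 2^q dvd m}. GB lam ys a q (m div 2^q))"
        using ip unfolding inner_post_def by simp
      also have "rmem s1 4 = FF lam ys a (m - 1)" using s1r r4 m_def by simp
      finally show ?thesis using FF_step[OF m1(1), of lam ys a] by simp
    qed
    have s25: "rmem s2 5 = (\<Sum>q\<in>{q\<in>{1..L}. \<not> 2^q dvd m}. Pt lam ys a m q)"
      using ip unfolding inner_post_def L_def by simp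
    have s20: "rmem s2 0 = \<sigma>" using s2fr s1r r037 by simp
    have k: "nmem s2 6 div 2 = 2^L" using s2n by simp
    have test: "(rmem s2 0 / sqrt (real (nmem s2 6 div 2)) < rmem s2 4 + rmem s2 5) = split_test n \<sigma> \<beta> ys a t"
    proof -
      have "t - a + 1 = m" using m_def by simp
      then show ?thesis using split_iff[of a t lam \<sigma> \<beta> n ys] pa lamd lam0 s20 k s24 s25 L_def by simp
    qed
    have st2: "arrows_state n \<sigma> \<beta> ys t = (if split_test n \<sigma> \<beta> ys a t then (t + 1, True) else (a, False))"
    proof -
      have e: "Suc (t - 1) = t" using t1 by simp
      have "arrows_state n \<sigma> \<beta> ys (Suc (t - 1)) = (let th = fst (arrows_state n \<sigma> \<beta> ys (t - 1)) in
         if split_test n \<sigma> \<beta> ys th (Suc (t - 1)) then (Suc (t - 1) + 1, True) else (th, False))"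
        by (rule arrows_state.simps(2))
      then show ?thesis unfolding e st Let_def by simp
    qed
    have trn: "concat (map (\<lambda>t. [OutEv (arrows_pred n \<sigma> \<beta> ys t), ReadEv]) [1..<t + 1]) =
       trace s @ [OutEv (arrows_pred n \<sigma> \<beta> ys t), ReadEv]" using tr t1 by simp
    have cost: "t1 + (t2 + t3) \<le> 400 * nlev n + 1000"
    proof -
      have "L \<le> nlev n" unfolding L_def by (rule nlev_mono[OF m1(2)])
      then show ?thesis using c1 c2 c3 by linarith
    qed
    have s2t: "nmem s2 1 = t" "nmem s2 0 = n" "nmem s2 2 = a" "nmem s2 3 = 0"
      using s2n s1n t_def n0 a_def by simp_all
    have R2: "\<forall>i\<le>m. rmem s2 (10 + i) = PS ys a i" using R1 s2fr by simp
    have r2o: "rmem s2 3 = lam" "rmem s2 7 = obs ys t" using s2fr s1r r037 by simp_all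
    show "OI n \<sigma> \<beta> ys lam (post_state s2) \<and> nmem (post_state s2) 1 = nmem s 1 + 1 \<and>
          t1 + (t2 + t3) \<le> 400 * nlev n + 1000"
    proof (cases "split_test n \<sigma> \<beta> ys a t")
      case True
      have ps: "post_state s2 = s2\<lparr>nmem := (nmem s2)(3 := 1, 2 := t + 1, 1 := t + 1), rmem := (rmem s2)(4 := 0)\<rparr>"
        unfolding post_state_def using test True s2t by simp
      have "rmem s2 (10 + 0) = PS ys a 0" using R2 by blast
      then have "rmem s2 10 = 0" by (simp add: PS_def)
      then show ?thesis unfolding ps OI_def using True st2 s2t r2o s2io s1i s1t trn t1 cost s20 t_def
        by (simp add: FF_def PS_def)
    next
      case False
      have ps: "post_state s2 = s2\<lparr>nmem := (nmem s2)(1 := t + 1)\<rparr>"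
        unfolding post_state_def using test False s2t by simp
      have "t + 1 - a = m" using m_def pa by simp
      then show ?thesis unfolding ps OI_def using False st2 s2t r2o s2io s1i s1t trn t1 cost s20 R2 s24 t_def
        by simp
    qed
  qed
qed


definition outer_loop :: com where
  "outer_loop = While (BNLess (nv 1) (NPlus (nv 0) (NC 1))) outer_body"

definition the_prog :: com where
  "the_prog = Seq (RStore (NC 3) (RTimes (rv 0) (RSqrt (RTimes (rv 2) (RLn (ROfNat (nv 0)))))))
     (Seq (NStore (NC 1) (NC 1)) (Seq (NStore (NC 2) (NC 1)) (Seq (NStore (NC 3) (NC 1)) outer_loop)))"

lemma ex_state_eq: "ex c s Q \<Longrightarrow> s = s' \<Longrightarrow> ex c s' Q" by simp

lemma prog_ex:
  assumes n2: "2 \<le> n" and sg: "0 < \<sigma>" and bt: "24 < \<beta>" and len: "length ys = n"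
  shows "ex the_prog (init_state n \<sigma> \<delta> \<beta> ys)
     (\<lambda>t s'. trace s' = arrows_trace n \<sigma> \<beta> ys \<and> t \<le> 100 + (1010 + 400 * nlev n) * n)"
proof -
  define lam where "lam = \<sigma> * sqrt (\<beta> * ln (real n))"
  have lam0: "0 \<le> lam" unfolding lam_def using sg bt n2 by simp
  define s0 where "s0 = (init_state n \<sigma> \<delta> \<beta> ys)\<lparr>rmem := (rmem (init_state n \<sigma> \<delta> \<beta> ys))(3 := lam),
       nmem := (nmem (init_state n \<sigma> \<delta> \<beta> ys))(1 := 1, 2 := 1, 3 := 1)\<rparr>"
  define K where "K = 400 * nlev n + 1000"
  let ?b = "BNLess (nv 1) (NPlus (nv 0) (NC 1))"
  define f where "f = (\<lambda>s::state. n + 1 - nmem s 1)"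
  have I0: "OI n \<sigma> \<beta> ys lam s0"
    unfolding OI_def s0_def init_state_def by (simp add: obs_def FF_def PS_def)
  have f0: "f s0 = n" unfolding f_def s0_def init_state_def by simp
  have step: "ex outer_body s (\<lambda>t s'. OI n \<sigma> \<beta> ys lam s' \<and> f s' < f s \<and> t \<le> K)"
    if I: "OI n \<sigma> \<beta> ys lam s" and b: "bval ?b s" for s
  proof -
    have tn: "nmem s 1 < n + 1" using I b unfolding OI_def by simp
    show ?thesis
      by (rule ex_mono[OF outer_step[OF I tn len lam_def lam0]]) (use tn in \<open>auto simp: f_def K_def\<close>)
  qed
  have W: "ex outer_loop s0 (\<lambda>t s'. OI n \<sigma> \<beta> ys lam s' \<and> \<not> bval ?b s' \<and> t \<le> (1 + bcost ?b + K) * f s0 + 1 + bcost ?b)"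
    unfolding outer_loop_def by (rule ex_While[of "OI n \<sigma> \<beta> ys lam" ?b outer_body f K, OF step I0])
  have fin: "trace s' = arrows_trace n \<sigma> \<beta> ys" if "OI n \<sigma> \<beta> ys lam s'" "\<not> bval ?b s'" for s'
  proof -
    have "nmem s' 1 = n + 1" using that unfolding OI_def by simp
    then show ?thesis using that unfolding OI_def arrows_trace_def by simp
  qed
  have cb: "(1 + bcost ?b + K) * f s0 + 1 + bcost ?b \<le> 78 + (1010 + 400 * nlev n) * n"
  proof -
    have "(1008 + 400 * nlev n) * n \<le> (1010 + 400 * nlev n) * n" by (rule mult_le_mono1) simp
    moreover have e: "1 + bcost ?b + K = 1008 + 400 * nlev n" by (simp add: K_def)
    moreover have "bcost ?b = 7" by simp
    ultimately show ?thesis unfolding f0 by (simp only:)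
  qed
  show ?thesis
    unfolding the_prog_def
    apply (rule ex_rules, simp?)+
    apply (rule ex_mono[OF ex_state_eq[OF W]])
     apply (simp add: s0_def init_state_def lam_def)
    apply (elim conjE)
    apply (intro conjI)
     apply (erule (1) fin)
    using cb apply linarith
    done
qed


lemma nlev_log: assumes "1 \<le> n" shows "real (nlev n) \<le> 1 + log 2 (real n)"
proof (cases "nlev n")
  case 0
  then show ?thesis using assms by simp
next
  case (Suc k)
  have "\<not> n \<le> 2^k" using Suc nlev_iff[of n k] by simp
  then have "2^k < n" by simp
  then have "real k < log 2 (real n)" by (rule less_log2_of_power)
  then show ?thesis using Suc by simp
qed

lemma final_bound:
  assumes n2: "2 \<le> n" and tb: "tm \<le> 100 + (1010 + 400 * nlev n) * n"
  shows "real tm \<le> (2000 / ln 2) * real n * ln (real n)"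
proof -
  define \<rho> where "\<rho> = log 2 (real n)"
  have r1: "1 \<le> \<rho>" unfolding \<rho>_def using n2 by simp
  have rn: "\<rho> = ln (real n) / ln 2" unfolding \<rho>_def by (simp add: log_def)
  have n1: "(1::real) \<le> real n" using n2 by simp
  have L: "real (nlev n) \<le> 1 + \<rho>" unfolding \<rho>_def using nlev_log n2 by simp
  have "real tm \<le> real (100 + (1010 + 400 * nlev n) * n)"
    using tb by (simp only: of_nat_le_iff)
  also have "\<dots> = 100 + (1010 + 400 * real (nlev n)) * real n" by simp
  also have "\<dots> \<le> 100 + (1010 + 400 * (1 + \<rho>)) * real n"
    using L n1 by (intro add_left_mono mult_right_mono) auto
  also have "\<dots> = 100 + 1410 * real n + 400 * (\<rho> * real n)" by (simp only: algebra_simps)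
  also have "\<dots> \<le> 2000 * (\<rho> * real n)"
  proof -
    have a: "1 * 1 \<le> \<rho> * real n" using r1 n1 by (intro mult_mono) auto
    have b: "1 * real n \<le> \<rho> * real n" using r1 n1 by (intro mult_right_mono) auto
    show ?thesis using a b by linarith
  qed
  also have "\<dots> = (2000 / ln 2) * real n * ln (real n)" unfolding rn by simp
  finally show ?thesis .
qed

theorem proposition3:
  "\<exists>(prog :: com) (C :: real). \<forall>(n :: nat) (\<sigma> :: real) (\<delta> :: real) (\<beta> :: real) (ys :: real list).
     2 \<le> n \<and> 0 < \<sigma> \<and> 0 < \<delta> \<and> \<delta> \<le> 1 \<and> 24 < \<beta> \<and> length ys = n \<longrightarrow>
     (\<exists>tm s'. big_step (prog, init_state n \<sigma> \<delta> \<beta> ys) tm s'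
        \<and> trace s' = arrows_trace n \<sigma> \<beta> ys
        \<and> real tm \<le> C * real n * ln (real n))"
proof (intro exI[of _ the_prog] exI[of _ "2000 / ln 2"] allI impI)
  fix n :: nat and \<sigma> \<delta> \<beta> :: real and ys :: "real list"
  assume H: "2 \<le> n \<and> 0 < \<sigma> \<and> 0 < \<delta> \<and> \<delta> \<le> 1 \<and> 24 < \<beta> \<and> length ys = n"
  then have "ex the_prog (init_state n \<sigma> \<delta> \<beta> ys)
     (\<lambda>t s'. trace s' = arrows_trace n \<sigma> \<beta> ys \<and> t \<le> 100 + (1010 + 400 * nlev n) * n)"
    by (intro prog_ex) auto
  then obtain tm s' where "big_step (the_prog, init_state n \<sigma> \<delta> \<beta> ys) tm s'"
    "trace s' = arrows_trace n \<sigma> \<beta> ys" "tm \<le> 100 + (1010 + 400 * nlev n) * n"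
    unfolding ex_def by blast
  then show "\<exists>tm s'. big_step (the_prog, init_state n \<sigma> \<delta> \<beta> ys) tm s'
        \<and> trace s' = arrows_trace n \<sigma> \<beta> ys
        \<and> real tm \<le> (2000 / ln 2) * real n * ln (real n)"
    using final_bound[of n tm] H by blast
qed


end
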